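(* Let $\Omega$, $\Gamma_1$, $\Gamma_2$, $q$, $h$, $(f,g)$, the operator $T$ and the operator $\overline{T}$ on $H^{1/2}_{00}(\Gamma_2)'$ be as described below. Let $A$ be a segmenting matrix whose diagonal entries $d_k:=a_{k+1,k+1}$ satisfy $\sum_{k=1}^\infty d_k(1-d_k)=\infty$. Let $\varphi_1\in H^{1/2}_{00}(\Gamma_2)'$ and let $(\phi_k)$ be the sequence generated by the iteration $(\varphi_1,A,\overline{T})$. Then there exists a subsequence $(\phi_{k_j})$ such that $(I-\overline{T})\phi_{k_j}\to0$ strongly in $H^{1/2}_{00}(\Gamma_2)'$.
   Context: $\Omega\subset\mathbb{R}^n$ is an open bounded simply connected set with analytic boundary, $\Gamma_1\subset\partial\Omega$ an open connected manifold, $\Gamma_2:=\partial\Omega\setminus\Gamma_1$; $q\in C^\infty(\mathbb{R})$ with values in $[q_{min},q_{max}]$, $0<q_{min}<q_{max}<\infty$; $P(u)=-\nabla\cdot(q(u)\nabla u)$; $h\in L^2(\Omega)$; $(f,g)\in H^{1/2}(\Gamma_1)\times H^{1/2}_{00}(\Gamma_1)'$ are consistent Cauchy data (the problem $Pu=h$ in $\Omega$, $u=f$, $q(u)u_\nu=g$ on $\Gamma_1$ has an $H^1(\Omega)$ solution). $\|\cdot\|$ is the norm of the Hilbert space $H^{1/2}_{00}(\Gamma_2)'$. $T:=L_d\circ L_n$ where $L_n(\varphi):=w|_{\Gamma_2}$ with $w\in H^1(\Omega)$ the unique weak solution of $Pw=h$ in $\Omega$, $w=f$ on $\Gamma_1$,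 $q(w)w_\nu=\varphi$ on $\Gamma_2$, and $L_d(\psi):=q(v)v_\nu|_{\Gamma_2}$ with $v$ the unique weak solution of $Pv=h$ in $\Omega$, $q(v)v_\nu=g$ on $\Gamma_1$, $v=\psi$ on $\Gamma_2$. $\overline{T}\varphi:=T\varphi$ if $\|T\varphi\|\le\|\varphi\|$, and $\overline{T}\varphi:=\frac{\|\varphi\|}{\|T\varphi\|}T\varphi$ if $\|T\varphi\|\ge\|\varphi\|$. A segmenting matrix is an infinite lower triangular matrix $A=(a_{ij})_{i,j\ge1}$ with $a_{11}=1$, $a_{ij}\ge0$, $a_{ij}=0$ for $j>i$, $\sum_{j=1}^i a_{ij}=1$, and $a_{i+1,j}=(1-a_{i+1,i+1})a_{ij}$ for $j\le i$. The iteration $(\varphi_1,A,\overline{T})$: for $k=1,2,\dots$, $\phi_k:=\sum_{j=1}^k a_{kj}\varphi_j$ and $\varphi_{k+1}:=\overline{T}(\phi_k)$. *)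

theory Defs
  imports "HOL-Analysis.Analysis"
begin

definition Tbar :: "('a::real_normed_vector \<Rightarrow> 'a) \<Rightarrow> 'a \<Rightarrow> 'a" where
  "Tbar T x = (if norm (T x) \<le> norm x then T x else (norm x / norm (T x)) *\<^sub>R T x)"

text \<open>Segmenting matrix, indices i, j starting at 1 (entries at index 0 are irrelevant).\<close>
definition segmenting :: "(nat \<Rightarrow> nat \<Rightarrow> real) \<Rightarrow> bool" where
  "segmenting a \<longleftrightarrow>
     a 1 1 = 1 \<and>
     (\<forall>i\<ge>1. \<forall>j\<ge>1. a i j \<ge> 0) \<and>
     (\<forall>i\<ge>1. \<forall>j>i. a i j = 0) \<and>
     (\<forall>i\<ge>1. (\<Sum>j=1..i. a i j) = 1) \<and>
     (\<forall>i\<ge>1. \<forall>j. 1 \<le> j \<and> j \<le> i \<longrightarrow> a (i+1) j = (1 - a (i+1) (i+1)) * a i j)"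

definition segmenting_iteration ::
  "(nat \<Rightarrow> nat \<Rightarrow> real) \<Rightarrow> ('a::real_vector \<Rightarrow> 'a) \<Rightarrow> 'a \<Rightarrow> (nat \<Rightarrow> 'a) \<Rightarrow> (nat \<Rightarrow> 'a) \<Rightarrow> bool" where
  "segmenting_iteration a S x1 vphi phi \<longleftrightarrow>
     vphi 1 = x1 \<and>
     (\<forall>k\<ge>1. phi k = (\<Sum>j=1..k. a k j *\<^sub>R vphi j)) \<and>
     (\<forall>k\<ge>1. vphi (k+1) = S (phi k))"

end

theory Submission
  imports Defs
begin

lemma Tbar_norm: "norm (Tbar T x) \<le> norm (x::'a::real_normed_vector)"
proof (cases "norm (T x) \<le> norm x")
  case True then show ?thesis by (simp add: Tbar_def)
next
  case False
  then have "norm (T x) > 0" using norm_ge_zero[of x] by linarith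
  then show ?thesis using False by (simp add: Tbar_def)
qed

lemma hilbert_id:
  fixes x y :: "'a::real_inner"
  shows "(norm ((1-d) *\<^sub>R x + d *\<^sub>R y))\<^sup>2 =
    (1-d) * (norm x)\<^sup>2 + d * (norm y)\<^sup>2 - d*(1-d) * (norm (x - y))\<^sup>2"
  unfolding power2_norm_eq_inner
  by (simp add: inner_add_left inner_add_right inner_diff_left
      inner_diff_right inner_commute[of y x] algebra_simps power2_eq_square)

theorem proposition6p6:
  fixes T :: "'a::{real_inner, complete_space} \<Rightarrow> 'a"
    and a :: "nat \<Rightarrow> nat \<Rightarrow> real"
    and x1 :: 'a
    and vphi phi :: "nat \<Rightarrow> 'a"
  assumes "segmenting a"
    and "\<not> summable (\<lambda>k. a (k+1) (k+1) * (1 - a (k+1) (k+1)))"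
    and "segmenting_iteration a (Tbar T) x1 vphi phi"
  shows "\<exists>r. strict_mono r \<and> (\<forall>j. 1 \<le> r j) \<and>
           ((\<lambda>j. phi (r j) - Tbar T (phi (r j))) \<longlonglongrightarrow> 0)"
proof -
  define S where "S = Tbar T"
  define d where "d k = a (k+1) (k+1)" for k
  define e where "e k = (norm (phi k - S (phi k)))\<^sup>2" for k
  define c where "c k = d k * (1 - d k) * e k" for k
  have seg: "a 1 1 = 1" "\<And>i j. i\<ge>1 \<Longrightarrow> j \<ge> 1 \<Longrightarrow> a i j \<ge> 0"
    "\<And>i j. i\<ge>1 \<Longrightarrow> j > i \<Longrightarrow> a i j = 0"
    "\<And>i. i\<ge>1 \<Longrightarrow> (\<Sum>j=1..i. a i j) = 1"
    "\<And>i j. i\<ge>1 \<Longrightarrow> 1 \<le> j \<Longrightarrow> j \<le> i \<Longrightarrow> a (i+1) j = (1 - a (i+1) (i+1)) * a i j"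
    using assms(1) unfolding segmenting_def by auto
  have it: "\<And>k. k\<ge>1 \<Longrightarrow> phi k = (\<Sum>j=1..k. a k j *\<^sub>R vphi j)"
    "\<And>k. k\<ge>1 \<Longrightarrow> vphi (k+1) = S (phi k)"
    using assms(3) unfolding segmenting_iteration_def S_def by auto
  have d0: "d k \<ge> 0" for k using seg(2)[of "k+1" "k+1"] by (simp add: d_def)
  have d1: "d k \<le> 1" for k
  proof -
    have "(\<Sum>j=1..k+1. a (k+1) j) = 1" using seg(4)[of "k+1"] by simp
    moreover have "(\<Sum>j=1..k+1. a (k+1) j) = (\<Sum>j=1..k. a (k+1) j) + a (k+1) (k+1)"
      by simp
    moreover have "(\<Sum>j=1..k. a (k+1) j) \<ge> 0" by (intro sum_nonneg) (simp add: seg(2))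
    ultimately show ?thesis by (simp add: d_def)
  qed
  have step: "phi (k+1) = (1 - d k) *\<^sub>R phi k + d k *\<^sub>R S (phi k)" if k: "k \<ge> 1" for k
  proof -
    have "phi (k+1) = (\<Sum>j=1..k+1. a (k+1) j *\<^sub>R vphi j)" using it(1)[of "k+1"] by simp
    also have "\<dots> = (\<Sum>j=1..k. a (k+1) j *\<^sub>R vphi j) + d k *\<^sub>R vphi (k+1)"
      by (simp add: d_def)
    also have "(\<Sum>j=1..k. a (k+1) j *\<^sub>R vphi j) = (\<Sum>j=1..k. (1 - d k) *\<^sub>R (a k j *\<^sub>R vphi j))"
      using seg(5)[OF k] by (intro sum.cong refl) (simp add: d_def)
    also have "\<dots> = (1 - d k) *\<^sub>R phi k" unfolding it(1)[OF k] scaleR_sum_right by simp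
    finally show ?thesis using it(2)[OF k] by simp
  qed
  have dec: "(norm (phi (k+1)))\<^sup>2 \<le> (norm (phi k))\<^sup>2 - c k" if k: "k \<ge> 1" for k
  proof -
    have "(norm (phi (k+1)))\<^sup>2 = (1 - d k) * (norm (phi k))\<^sup>2 + d k * (norm (S (phi k)))\<^sup>2 - c k"
      unfolding step[OF k] hilbert_id c_def e_def by simp
    moreover have "(norm (S (phi k)))\<^sup>2 \<le> (norm (phi k))\<^sup>2"
      unfolding S_def by (intro power_mono Tbar_norm) simp
    moreover have "d k * (norm (S (phi k)))\<^sup>2 \<le> d k * (norm (phi k))\<^sup>2"
      using calculation(2) d0[of k] by (rule mult_left_mono)
    ultimately show ?thesis by (simp add: algebra_simps)
  qed
  have c0: "c k \<ge> 0" for k using d0[of k] d1[of k] by (simp add: c_def e_def)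
  have tele: "(\<Sum>k<n. c (k+1)) \<le> (norm (phi 1))\<^sup>2 - (norm (phi (n+1)))\<^sup>2" for n
  proof (induction n)
    case 0 then show ?case by simp
  next
    case (Suc n)
    have "c (n+1) \<le> (norm (phi (n+1)))\<^sup>2 - (norm (phi (Suc n + 1)))\<^sup>2"
      using dec[of "n+1"] by simp
    then show ?case using Suc by simp
  qed
  have summ: "summable (\<lambda>k. c (k+1))"
  proof (rule summableI_nonneg_bounded[where x="(norm (phi 1))\<^sup>2"])
    show "0 \<le> c (k+1)" for k by (rule c0)
    show "(\<Sum>k<n. c (k+1)) \<le> (norm (phi 1))\<^sup>2" for n
      using tele[of n] by (smt (verit) zero_le_power2)
  qed
  have freq: "\<exists>k\<ge>N. e k < eps" if eps: "eps > 0" for N eps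
  proof (rule ccontr)
    assume "\<not> ?thesis"
    then have ge: "\<And>k. k \<ge> N \<Longrightarrow> e k \<ge> eps" by force
    have "summable (\<lambda>k. c (k+1) / eps)" using summ by (rule summable_divide)
    then have "summable (\<lambda>k. d (k+1) * (1 - d (k+1)))"
    proof (rule summable_comparison_test_ev[rotated])
      show "\<forall>\<^sub>F k in sequentially. norm (d (k+1) * (1 - d (k+1))) \<le> c (k+1) / eps"
        unfolding eventually_sequentially
      proof (intro exI allI impI)
        fix k assume "k \<ge> N"
        then have "e (k+1) \<ge> eps" using ge by simp
        moreover have "d (k+1) * (1 - d (k+1)) \<ge> 0" using d0 d1 by simp
        ultimately have "d (k+1) * (1 - d (k+1)) * eps \<le> c (k+1)"
          unfolding c_def by (intro mult_left_mono) auto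
        then show "norm (d (k+1) * (1 - d (k+1))) \<le> c (k+1) / eps"
          using eps \<open>d (k+1) * (1 - d (k+1)) \<ge> 0\<close> by (simp add: pos_le_divide_eq)
      qed
    qed
    then have "summable (\<lambda>k. d k * (1 - d k))"
      using summable_Suc_iff[of "\<lambda>k. d k * (1 - d k)"] by simp
    then show False using assms(2) by (simp add: d_def)
  qed
  define nxt where "nxt m n = (LEAST k. k > m \<and> e k < 1 / (real n + 1))" for m n
  have nxt: "nxt m n > m \<and> e (nxt m n) < 1 / (real n + 1)" for m n
  proof -
    obtain k where "k \<ge> Suc m" "e k < 1 / (real n + 1)" using freq[of "1 / (real n + 1)" "Suc m"] by auto
    then have "\<exists>k. k > m \<and> e k < 1 / (real n + 1)" by (intro exI[of _ k]) simp
    then show ?thesis unfolding nxt_def by (rule LeastI_ex)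
  qed
  define r where "r = rec_nat (nxt 0 0) (\<lambda>n p. nxt p (Suc n))"
  have r0: "r 0 = nxt 0 0" and rS: "r (Suc n) = nxt (r n) (Suc n)" for n
    by (simp_all add: r_def)
  have rsm: "strict_mono r" by (rule strict_monoI_Suc) (simp add: rS nxt)
  have r1: "1 \<le> r j" for j by (cases j) (use nxt r0 rS in \<open>auto simp: Suc_le_eq intro: le_less_trans[OF _ nxt[THEN conjunct1]]\<close>)
  have re: "e (r n) < 1 / (real n + 1)" for n
  proof (cases n)
    case 0 then show ?thesis using nxt[of 0 0] r0 by simp
  next
    case (Suc m) then show ?thesis using nxt[of "r m" "Suc m"] rS[of m] by simp
  qed
  have "(\<lambda>n. e (r n)) \<longlonglongrightarrow> 0"
  proof (rule tendsto_sandwich[of "\<lambda>_. 0" _ _ "\<lambda>n. 1 / (real n + 1)"])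
    show "\<forall>\<^sub>F n in sequentially. 0 \<le> e (r n)" by (simp add: e_def)
    show "\<forall>\<^sub>F n in sequentially. e (r n) \<le> 1 / (real n + 1)" using re less_imp_le by (intro always_eventually allI) blast
    show "(\<lambda>n. 1 / (real n + 1)) \<longlonglongrightarrow> 0" using LIMSEQ_inverse_real_of_nat_add[of 0] by (simp add: inverse_eq_divide add.commute)
  qed simp
  then have "(\<lambda>n. sqrt (e (r n))) \<longlonglongrightarrow> 0" using tendsto_real_sqrt by fastforce
  then have "(\<lambda>n. norm (phi (r n) - S (phi (r n)))) \<longlonglongrightarrow> 0" by (simp add: e_def)
  then have "(\<lambda>n. phi (r n) - S (phi (r n))) \<longlonglongrightarrow> 0" by (simp add: tendsto_norm_zero_iff)
  then show ?thesis using rsm r1 unfolding S_def by blast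
qed

end
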